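(* Let $\delta\geq0$. If a $2$-edge-coloured (red/blue) $K_n$ is $\delta$-close to being split, then it has a vertex incident to at most $(1/4+3\delta)n$ red edges or a vertex incident to at most $(1/4+3\delta)n$ blue edges.
   Context: A $2$-edge-coloured $K_n$ is split if its vertex set can be partitioned into a set spanning only red edges and a set spanning only blue edges. It is $\delta$-close to being split if it can be made into a split colouring by changing the colours of at most $\delta n^2$ edges. *)

theory Defs
  imports Complex_Main
begin

text \<open>A red/blue 2-edge-colouring is given by the set R of red edges (a subset of the edges of K_n);
all other edges of K_n are blue.\<close>

definition edges_K :: "nat \<Rightarrow> nat set set" where
  "edges_K n = {e. \<exists>u v. e = {u, v} \<and> u < n \<and> v < n \<and> u \<noteq> v}"

definition is_split :: "nat \<Rightarrow> nat set set \<Rightarrow> bool" where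
  "is_split n R \<longleftrightarrow> (\<exists>A B. A \<union> B = {..<n} \<and> A \<inter> B = {} \<and>
      (\<forall>e\<in>edges_K n. e \<subseteq> A \<longrightarrow> e \<in> R) \<and>
      (\<forall>e\<in>edges_K n. e \<subseteq> B \<longrightarrow> e \<notin> R))"

definition delta_close_split :: "real \<Rightarrow> nat \<Rightarrow> nat set set \<Rightarrow> bool" where
  "delta_close_split \<delta> n R \<longleftrightarrow> (\<exists>R'. R' \<subseteq> edges_K n \<and> is_split n R' \<and>
      real (card ((R - R') \<union> (R' - R))) \<le> \<delta> * real n ^ 2)"

definition red_degree :: "nat \<Rightarrow> nat set set \<Rightarrow> nat \<Rightarrow> nat" where
  "red_degree n R v = card {u. u < n \<and> u \<noteq> v \<and> {u, v} \<in> R}"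

definition blue_degree :: "nat \<Rightarrow> nat set set \<Rightarrow> nat \<Rightarrow> nat" where
  "blue_degree n R v = card {u. u < n \<and> u \<noteq> v \<and> {u, v} \<notin> R}"

end

theory Submission
  imports Defs
begin

lemma finite_edges_K: "finite (edges_K n)"
proof -
  have "edges_K n \<subseteq> Pow {..<n}" unfolding edges_K_def by auto
  then show ?thesis by (rule finite_subset) simp
qed

lemma inj_lt: "inj_on (\<lambda>(v::nat, u). {u, v}) {(v, u). u < v}"
proof (rule inj_onI)
  fix x y :: "nat \<times> nat"
  assume "x \<in> {(v, u). u < v}" "y \<in> {(v, u). u < v}"
    "(\<lambda>(v, u). {u, v}) x = (\<lambda>(v, u). {u, v}) y"
  then show "x = y"
    by (cases x; cases y) (auto simp: doubleton_eq_iff)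
qed

lemma inj_gt: "inj_on (\<lambda>(v::nat, u). {u, v}) {(v, u). v < u}"
proof (rule inj_onI)
  fix x y :: "nat \<times> nat"
  assume "x \<in> {(v, u). v < u}" "y \<in> {(v, u). v < u}"
    "(\<lambda>(v, u). {u, v}) x = (\<lambda>(v, u). {u, v}) y"
  then show "x = y"
    by (cases x; cases y) (auto simp: doubleton_eq_iff)
qed

lemma half_count:
  fixes D :: "nat set set" and n :: nat
  assumes fD: "finite D"
  shows "card (SIGMA v:{..<n}. {u. u < v \<and> {u, v} \<in> D}) \<le> card D"
proof (rule card_inj_on_le)
  show "inj_on (\<lambda>(v, u). {u, v}) (SIGMA v:{..<n}. {u. u < v \<and> {u, v} \<in> D})"
    by (rule inj_on_subset[OF inj_lt]) auto
  show "(\<lambda>(v, u). {u, v}) ` (SIGMA v:{..<n}. {u. u < v \<and> {u, v} \<in> D}) \<subseteq> D" by auto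
qed (rule fD)

lemma half_count2:
  fixes D :: "nat set set" and n :: nat
  assumes fD: "finite D"
  shows "card (SIGMA v:{..<n}. {u. v < u \<and> u < n \<and> {u, v} \<in> D}) \<le> card D"
proof (rule card_inj_on_le)
  show "inj_on (\<lambda>(v, u). {u, v}) (SIGMA v:{..<n}. {u. v < u \<and> u < n \<and> {u, v} \<in> D})"
    by (rule inj_on_subset[OF inj_gt]) auto
  show "(\<lambda>(v, u). {u, v}) ` (SIGMA v:{..<n}. {u. v < u \<and> u < n \<and> {u, v} \<in> D}) \<subseteq> D" by auto
qed (rule fD)

lemma deg_sum:
  fixes D :: "nat set set" and n :: nat
  assumes fD: "finite D"
  shows "(\<Sum>v<n. card {u. u < n \<and> u \<noteq> v \<and> {u, v} \<in> D}) \<le> 2 * card D"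
proof -
  have "(\<Sum>v<n. card {u. u < n \<and> u \<noteq> v \<and> {u, v} \<in> D})
      \<le> (\<Sum>v<n. card {u. u < v \<and> {u, v} \<in> D} + card {u. v < u \<and> u < n \<and> {u, v} \<in> D})"
  proof (rule sum_mono)
    fix v assume "v \<in> {..<n}"
    have "{u. u < n \<and> u \<noteq> v \<and> {u, v} \<in> D} \<subseteq> {u. u < v \<and> {u, v} \<in> D} \<union> {u. v < u \<and> u < n \<and> {u, v} \<in> D}"
      by auto
    then have "card {u. u < n \<and> u \<noteq> v \<and> {u, v} \<in> D} \<le> card ({u. u < v \<and> {u, v} \<in> D} \<union> {u. v < u \<and> u < n \<and> {u, v} \<in> D})"
      by (intro card_mono) auto
    also have "\<dots> \<le> card {u. u < v \<and> {u, v} \<in> D} + card {u. v < u \<and> u < n \<and> {u, v} \<in> D}"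
      by (rule card_Un_le)
    finally show "card {u. u < n \<and> u \<noteq> v \<and> {u, v} \<in> D} \<le> card {u. u < v \<and> {u, v} \<in> D} + card {u. v < u \<and> u < n \<and> {u, v} \<in> D}" .
  qed
  also have "\<dots> = card (SIGMA v:{..<n}. {u. u < v \<and> {u, v} \<in> D}) + card (SIGMA v:{..<n}. {u. v < u \<and> u < n \<and> {u, v} \<in> D})"
  proof -
    have f1: "\<forall>v\<in>{..<n}. finite {u. u < v \<and> {u, v} \<in> D}" by auto
    have f2: "\<forall>v\<in>{..<n}. finite {u. v < u \<and> u < n \<and> {u, v} \<in> D}" by auto
    show ?thesis by (simp only: sum.distrib card_SigmaI[OF finite_lessThan f1] card_SigmaI[OF finite_lessThan f2])
  qed
  also have "\<dots> \<le> 2 * card D" using half_count[OF fD, of n] half_count2[OF fD, of n] by simp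
  finally show ?thesis .
qed

theorem proposition3p5:
  fixes \<delta> :: real and n :: nat and R :: "nat set set"
  assumes "\<delta> \<ge> 0" and "n \<ge> 1"
    and "R \<subseteq> edges_K n"
    and "delta_close_split \<delta> n R"
  shows "\<exists>v<n. real (red_degree n R v) \<le> (1/4 + 3*\<delta>) * real n
            \<or> real (blue_degree n R v) \<le> (1/4 + 3*\<delta>) * real n"
proof -
  obtain R' where "R' \<subseteq> edges_K n \<and> is_split n R' \<and>
      real (card ((R - R') \<union> (R' - R))) \<le> \<delta> * real n ^ 2"
    using assms(4) unfolding delta_close_split_def by (elim exE) (rule that)
  then have R'E: "R' \<subseteq> edges_K n" and spl: "is_split n R'"
    and cl: "real (card ((R - R') \<union> (R' - R))) \<le> \<delta> * real n ^ 2" by auto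
  obtain A B where "A \<union> B = {..<n} \<and> A \<inter> B = {} \<and>
      (\<forall>e\<in>edges_K n. e \<subseteq> A \<longrightarrow> e \<in> R') \<and>
      (\<forall>e\<in>edges_K n. e \<subseteq> B \<longrightarrow> e \<notin> R')"
    using spl unfolding is_split_def by (elim exE) (rule that)
  then have AB: "A \<union> B = {..<n}" "A \<inter> B = {}"
    and Ared: "\<forall>e\<in>edges_K n. e \<subseteq> A \<longrightarrow> e \<in> R'"
    and Bblue: "\<forall>e\<in>edges_K n. e \<subseteq> B \<longrightarrow> e \<notin> R'" by auto
  define D where "D = (R - R') \<union> (R' - R)"
  have fD: "finite D" unfolding D_def
    using finite_subset[OF assms(3) finite_edges_K] finite_subset[OF R'E finite_edges_K] by auto
  define d where "d v = card {u. u < n \<and> u \<noteq> v \<and> {u, v} \<in> D}" for v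
  have fA: "finite A" and fB: "finite B" using AB(1)
    by (metis finite_Un finite_lessThan)+
  define f where "f v = (if v \<in> A then blue_degree n R v else red_degree n R v)" for v
  have edge: "{u, v} \<in> edges_K n" if "u < n" "v < n" "u \<noteq> v" for u v
    using that unfolding edges_K_def by blast
  have fB_le: "f v \<le> (\<Sum>u\<in>A. if {u, v} \<in> R' then 1 else 0) + d v" if "v \<in> B" for v
  proof -
    have vA: "v \<notin> A" using that AB(2) by blast
    have vn: "v < n" using that AB(1) by blast
    have "{u. u < n \<and> u \<noteq> v \<and> {u, v} \<in> R} \<subseteq> {u\<in>A. {u, v} \<in> R'} \<union> {u. u < n \<and> u \<noteq> v \<and> {u, v} \<in> D}"
    proof
      fix u assume u: "u \<in> {u. u < n \<and> u \<noteq> v \<and> {u, v} \<in> R}"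
      show "u \<in> {u\<in>A. {u, v} \<in> R'} \<union> {u. u < n \<and> u \<noteq> v \<and> {u, v} \<in> D}"
      proof (cases "{u, v} \<in> R'")
        case True
        have "u \<notin> B"
        proof
          assume "u \<in> B"
          then have "{u, v} \<subseteq> B" using that by auto
          then show False using Bblue edge[of u v] u vn True by auto
        qed
        then show ?thesis using u AB(1) True by auto
      next
        case False
        then show ?thesis using u unfolding D_def by auto
      qed
    qed
    then have "red_degree n R v \<le> card ({u\<in>A. {u, v} \<in> R'} \<union> {u. u < n \<and> u \<noteq> v \<and> {u, v} \<in> D})"
      unfolding red_degree_def by (intro card_mono) (use fA in auto)
    also have "\<dots> \<le> card {u\<in>A. {u, v} \<in> R'} + d v" unfolding d_def by (rule card_Un_le)
    also have "card {u\<in>A. {u, v} \<in> R'} = (\<Sum>u\<in>A. if {u, v} \<in> R' then 1 else 0)"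
      using fA by (simp add: sum.If_cases Int_def)
    finally show ?thesis unfolding f_def using vA by simp
  qed
  have fA_le: "f v \<le> (\<Sum>u\<in>B. if {u, v} \<in> R' then 0 else 1) + d v" if "v \<in> A" for v
  proof -
    have vB: "v \<notin> B" using that AB(2) by blast
    have vn: "v < n" using that AB(1) by blast
    have "{u. u < n \<and> u \<noteq> v \<and> {u, v} \<notin> R} \<subseteq> {u\<in>B. {u, v} \<notin> R'} \<union> {u. u < n \<and> u \<noteq> v \<and> {u, v} \<in> D}"
    proof
      fix u assume u: "u \<in> {u. u < n \<and> u \<noteq> v \<and> {u, v} \<notin> R}"
      show "u \<in> {u\<in>B. {u, v} \<notin> R'} \<union> {u. u < n \<and> u \<noteq> v \<and> {u, v} \<in> D}"
      proof (cases "{u, v} \<in> R'")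
        case False
        have "u \<notin> A"
        proof
          assume "u \<in> A"
          then have "{u, v} \<subseteq> A" using that by auto
          then show False using Ared edge[of u v] u vn False by auto
        qed
        then show ?thesis using u AB(1) False by auto
      next
        case True
        then show ?thesis using u unfolding D_def by auto
      qed
    qed
    then have "blue_degree n R v \<le> card ({u\<in>B. {u, v} \<notin> R'} \<union> {u. u < n \<and> u \<noteq> v \<and> {u, v} \<in> D})"
      unfolding blue_degree_def by (intro card_mono) (use fB in auto)
    also have "\<dots> \<le> card {u\<in>B. {u, v} \<notin> R'} + d v" unfolding d_def by (rule card_Un_le)
    also have "card {u\<in>B. {u, v} \<notin> R'} = (\<Sum>u\<in>B. if {u, v} \<in> R' then 0 else 1)"
      using fB by (simp add: sum.If_cases Int_def)
    finally show ?thesis unfolding f_def using that by simp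
  qed
  have "(\<Sum>v<n. f v) = (\<Sum>v\<in>A. f v) + (\<Sum>v\<in>B. f v)"
    using AB fA fB by (metis sum.union_disjoint)
  also have "\<dots> \<le> (\<Sum>v\<in>A. (\<Sum>u\<in>B. if {u, v} \<in> R' then 0 else 1) + d v)
       + (\<Sum>v\<in>B. (\<Sum>u\<in>A. if {u, v} \<in> R' then 1 else 0) + d v)"
    by (intro add_mono sum_mono fA_le fB_le)
  also have "\<dots> = (\<Sum>v\<in>A. (\<Sum>u\<in>B. if {u, v} \<in> R' then 0 else 1))
       + (\<Sum>v\<in>B. (\<Sum>u\<in>A. if {u, v} \<in> R' then 1 else 0)) + ((\<Sum>v\<in>A. d v) + (\<Sum>v\<in>B. d v))"
    by (simp add: sum.distrib)
  also have "(\<Sum>v\<in>B. (\<Sum>u\<in>A. if {u, v} \<in> R' then 1 else 0)) = (\<Sum>v\<in>A. (\<Sum>u\<in>B. if {u, v} \<in> R' then 1 else 0::nat))"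
    by (subst sum.swap) (simp add: insert_commute)
  also have "(\<Sum>v\<in>A. d v) + (\<Sum>v\<in>B. d v) = (\<Sum>v<n. d v)"
    using AB fA fB by (metis sum.union_disjoint)
  also have "(\<Sum>v\<in>A. (\<Sum>u\<in>B. if {u, v} \<in> R' then 0 else 1)) + (\<Sum>v\<in>A. (\<Sum>u\<in>B. if {u, v} \<in> R' then 1 else 0::nat))
      = card A * card B"
    by (simp add: sum.distrib[symmetric] if_distrib cong: if_cong)
  finally have S: "(\<Sum>v<n. f v) \<le> card A * card B + (\<Sum>v<n. d v)" .
  have dS: "(\<Sum>v<n. d v) \<le> 2 * card D" unfolding d_def by (rule deg_sum[OF fD])
  have nAB: "card A + card B = n" using AB fA fB by (metis card_Un_disjoint card_lessThan)
  have ab: "4 * real (card A * card B) \<le> real n ^ 2"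
  proof -
    have "0 \<le> (real (card A) - real (card B))^2" by simp
    then show ?thesis using nAB[symmetric] by (simp add: power2_eq_square algebra_simps)
  qed
  have Sr: "real (\<Sum>v<n. f v) \<le> real n ^ 2 / 4 + 2 * \<delta> * real n ^ 2"
  proof -
    have "real (\<Sum>v<n. f v) \<le> real (card A * card B) + 2 * real (card D)"
      using S dS by linarith
    then show ?thesis using ab cl unfolding D_def by linarith
  qed
  show ?thesis
  proof (rule ccontr)
    assume H: "\<not> ?thesis"
    have lt: "(1/4 + 3*\<delta>) * real n < real (f v)" if "v < n" for v
      using H that unfolding f_def by (auto split: if_splits)
    have "(\<Sum>v<n. (1/4 + 3*\<delta>) * real n) < (\<Sum>v<n. real (f v))"
      using assms(2) by (intro sum_strict_mono) (auto intro: lt simp: lessThan_empty_iff)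
    then have "real n * ((1/4 + 3*\<delta>) * real n) < real (\<Sum>v<n. f v)" by simp
    moreover have "real n ^ 2 / 4 + 2 * \<delta> * real n ^ 2 \<le> real n * ((1/4 + 3*\<delta>) * real n)"
      using assms(1) by (simp add: power2_eq_square algebra_simps)
    ultimately show False using Sr by linarith
  qed
qed

end
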